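(* Consider two assets with uncorrelated returns of equal variance and means $\mu_1,\mu_2$, a weight $w\in[0,1]$ on asset 1, and the mean–variance utility $U(w;\delta)=\mu_2+w\delta-\lambda\big(w^2+(1-w)^2\big)$ with $\lambda>0$ and mean gap $\delta=\mu_1-\mu_2$. Suppose $\delta\sim\mathcal N(0,\tau^2)$ with $\tau^2>0$, and one observes $\hat\delta$ with $\hat\delta\mid\delta\sim\mathcal N(\delta,s^2)$, $s^2>0$. Define the predict-then-optimize rule $w_{\mathrm{pto}}(\hat\delta)=\Pi_{[0,1]}\big(\tfrac12+\tfrac{\hat\delta}{4\lambda}\big)$ and, with $\rho=\tfrac{\tau^2}{\tau^2+s^2}\in(0,1)$, the shrinkage rule $w_{\mathrm{e2e}}(\hat\delta)=\Pi_{[0,1]}\big(\tfrac12+\rho\tfrac{\hat\delta}{4\lambda}\big)$. Then $w_{\mathrm{e2e}}$ is the Bayes-optimal policy: for every measurable policy $w(\hat\delta)\in[0,1]$, $\mathbb E[U(w_{\mathrm{e2e}}(\hat\delta);\delta)]\ge\mathbb E[U(w(\hat\delta);\delta)]$, and the plug-in rule is strictly dominated: $\mathbb E[U(w_{\mathrm{pto}}(\hat\delta);\delta)]<\mathbb E[U(w_{\mathrm{e2e}}(\hat\delta);\delta)]$.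
   Context: $\Pi_{[0,1]}$ denotes clipping (projection) onto the interval $[0,1]$. The variance scale of the returns is absorbed into $\lambda$, and $\mu_2$ is a fixed real number. *)

theory Defs
  imports "HOL-Probability.Probability"
begin

definition clip01 :: "real \<Rightarrow> real" where
  "clip01 x = max 0 (min 1 x)"

definition mv_utility :: "real \<Rightarrow> real \<Rightarrow> real \<Rightarrow> real \<Rightarrow> real" where
  "mv_utility mu2 lam w d = mu2 + w * d - lam * (w\<^sup>2 + (1 - w)\<^sup>2)"

definition w_pto :: "real \<Rightarrow> real \<Rightarrow> real" where
  "w_pto lam dh = clip01 (1/2 + dh / (4 * lam))"

definition w_e2e :: "real \<Rightarrow> real \<Rightarrow> real \<Rightarrow> real \<Rightarrow> real" where
  "w_e2e tau2 s2 lam dh = clip01 (1/2 + (tau2 / (tau2 + s2)) * dh / (4 * lam))"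

end

theory Submission
  imports Defs
begin

lemma gauss_prod:
  assumes p: "p > 0" and q: "q > 0"
  shows "normal_density 0 (sqrt p) x * normal_density 0 (sqrt q) (y - x) =
    normal_density 0 (sqrt (p+q)) y * normal_density (p*y/(p+q)) (sqrt (p*q/(p+q))) x"
proof -
  have sqrt: "(sqrt (2 * pi * (q + p)) * sqrt (2 * pi * (q * p) / (q + p))) =
    (sqrt (2 * pi * q) * sqrt (2 * pi * p))"
    using p q by (subst power_eq_iff_eq_base[symmetric, where n=2])
       (simp_all add: real_sqrt_mult[symmetric] power2_eq_square)
  show ?thesis using p q
    apply (simp add: normal_density_def sqrt mult_exp_exp add.commute[of p q] mult.commute[of p q])
    apply (simp add: divide_simps power2_eq_square)
    apply (simp add: algebra_simps)
    done
qed

lemma gauss_moment: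
  assumes p: "p > 0" and q: "q > 0"
  shows "(\<integral>x. normal_density 0 (sqrt p) x * normal_density 0 (sqrt q) (y - x) * x \<partial>lborel) =
    normal_density 0 (sqrt (p+q)) y * (p*y/(p+q))"
proof -
  have "(\<integral>x. normal_density 0 (sqrt p) x * normal_density 0 (sqrt q) (y - x) * x \<partial>lborel) =
    (\<integral>x. normal_density 0 (sqrt (p+q)) y * (normal_density (p*y/(p+q)) (sqrt (p*q/(p+q))) x * x) \<partial>lborel)"
    using p q by (simp add: gauss_prod mult.assoc)
  also have "\<dots> = normal_density 0 (sqrt (p+q)) y * (p*y/(p+q))"
    using p q by (simp add: integral_normal_moment_nz_1)
  finally show ?thesis .
qed

lemma shift_int:
  fixes f :: "real \<Rightarrow> real"
  shows "(\<integral>y. f (y - x) \<partial>lborel) = (\<integral>y. f y \<partial>lborel)"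
  using lborel_integral_real_affine[of 1 "\<lambda>y. f (y - x)" x] by simp

lemma shift_integrable:
  fixes f :: "real \<Rightarrow> real"
  shows "integrable lborel (\<lambda>y. f (y - x)) \<longleftrightarrow> integrable lborel f"
  using lborel_integrable_real_affine_iff[of 1 f "-x"] by simp

lemma mle: fixes a b c t :: real
  assumes "0 \<le> a" "0 \<le> b" "0 \<le> c" "t \<le> 1"
  shows "a*b*(t*c) \<le> a*c*b"
proof -
  have "a*b*(t*c) = (a*b*c)*t" by simp
  also have "\<dots> \<le> a*b*c" using assms by (intro mult_left_le) auto
  finally show ?thesis by (simp add: ac_simps)
qed

lemma key2d:
  fixes g :: "real \<Rightarrow> real"
  assumes p: "p > 0" and q: "q > 0"
    and g[measurable]: "g \<in> borel_measurable borel" and gb: "\<And>y. \<bar>g y\<bar> \<le> 1"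
  shows "(\<integral>z. normal_density 0 (sqrt p) (fst z) * normal_density 0 (sqrt q) (snd z) *
             (g (fst z + snd z) * fst z) \<partial>(lborel \<Otimes>\<^sub>M lborel))
       = (\<integral>y. normal_density 0 (sqrt (p+q)) y * (p/(p+q) * (g y * y)) \<partial>lborel)"
proof -
  let ?fd = "normal_density 0 (sqrt p)" and ?fe = "normal_density 0 (sqrt q)"
  define F where "F = (\<lambda>z. ?fd (fst z) * ?fe (snd z) * (g (fst z + snd z) * fst z))"
  define G where "G = (\<lambda>x y. ?fd x * ?fe (y - x) * (g y * x))"
  define H where "H = (\<lambda>z. ?fd (fst z) * \<bar>fst z\<bar> * ?fe (snd z))"
  define H' where "H' = (\<lambda>(x,y). ?fd x * \<bar>x\<bar> * ?fe (y - x))"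
  have intfdabs: "integrable lborel (\<lambda>x. ?fd x * \<bar>x\<bar>)"
    using integrable_normal_moment_abs[of "sqrt p" 0 1] p by simp
  have H: "integrable (lborel \<Otimes>\<^sub>M lborel) H"
  proof (rule lborel_pair.Fubini_integrable)
    show "H \<in> borel_measurable (lborel \<Otimes>\<^sub>M lborel)" unfolding H_def by measurable
    have "(\<lambda>x. \<integral>y. norm (H (x, y)) \<partial>lborel) = (\<lambda>x. ?fd x * \<bar>x\<bar>)"
      using q by (auto simp: H_def abs_mult)
    then show "integrable lborel (\<lambda>x. \<integral>y. norm (H (x, y)) \<partial>lborel)" using intfdabs by simp
    show "AE x in lborel. integrable lborel (\<lambda>y. H (x, y))"
      using q by (auto simp: H_def)
  qed
  have H': "integrable (lborel \<Otimes>\<^sub>M lborel) H'"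
  proof (rule lborel_pair.Fubini_integrable)
    show "H' \<in> borel_measurable (lborel \<Otimes>\<^sub>M lborel)" unfolding H'_def by measurable
    have "(\<lambda>x. \<integral>y. norm (H' (x, y)) \<partial>lborel) = (\<lambda>x. ?fd x * \<bar>x\<bar>)"
      using q by (auto simp: H'_def abs_mult shift_int[of ?fe])
    then show "integrable lborel (\<lambda>x. \<integral>y. norm (H' (x, y)) \<partial>lborel)" using intfdabs by simp
    show "AE x in lborel. integrable lborel (\<lambda>y. H' (x, y))"
      using q by (auto simp: H'_def shift_integrable[of ?fe])
  qed
  have F: "integrable (lborel \<Otimes>\<^sub>M lborel) F"
  proof (rule Bochner_Integration.integrable_bound[OF H])
    show "F \<in> borel_measurable (lborel \<Otimes>\<^sub>M lborel)" unfolding F_def by measurable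
    show "AE z in lborel \<Otimes>\<^sub>M lborel. norm (F z) \<le> norm (H z)"
    proof (intro AE_I2)
      fix z
      have "\<bar>g (fst z + snd z)\<bar> \<le> 1" by (rule gb)
      then show "norm (F z) \<le> norm (H z)"
        by (auto simp: F_def H_def abs_mult intro!: mle)
    qed
  qed
  have G: "integrable (lborel \<Otimes>\<^sub>M lborel) (case_prod G)"
  proof (rule Bochner_Integration.integrable_bound[OF H'])
    show "case_prod G \<in> borel_measurable (lborel \<Otimes>\<^sub>M lborel)" unfolding G_def by measurable
    show "AE z in lborel \<Otimes>\<^sub>M lborel. norm (case_prod G z) \<le> norm (H' z)"
    proof (intro AE_I2)
      fix z :: "real \<times> real"
      obtain x y where z: "z = (x,y)" by (cases z)
      have "\<bar>g y\<bar> \<le> 1" by (rule gb)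
      then show "norm (case_prod G z) \<le> norm (H' z)"
        by (auto simp: z G_def H'_def abs_mult intro!: mle)
    qed
  qed
  have "integral\<^sup>L (lborel \<Otimes>\<^sub>M lborel) F = (\<integral>x. (\<integral>e. F (x, e) \<partial>lborel) \<partial>lborel)"
    using lborel_pair.integral_fst'[OF F] by simp
  also have "\<dots> = (\<integral>x. (\<integral>y. G x y \<partial>lborel) \<partial>lborel)"
  proof (rule Bochner_Integration.integral_cong[OF refl])
    fix x
    show "(\<integral>e. F (x, e) \<partial>lborel) = (\<integral>y. G x y \<partial>lborel)"
      using lborel_integral_real_affine[of 1 "\<lambda>y. G x y" x]
      by (simp add: F_def G_def add.commute)
  qed
  also have "\<dots> = (\<integral>y. (\<integral>x. G x y \<partial>lborel) \<partial>lborel)"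
    using lborel_pair.Fubini_integral[OF G] by simp
  also have "\<dots> = (\<integral>y. normal_density 0 (sqrt (p+q)) y * (p/(p+q) * (g y * y)) \<partial>lborel)"
  proof (rule Bochner_Integration.integral_cong[OF refl])
    fix y
    have "(\<integral>x. G x y \<partial>lborel) = (\<integral>x. g y * (?fd x * ?fe (y - x) * x) \<partial>lborel)"
      unfolding G_def by (simp add: ac_simps)
    also have "\<dots> = g y * (\<integral>x. ?fd x * ?fe (y - x) * x \<partial>lborel)"
      by (rule integral_mult_right_zero)
    also have "\<dots> = normal_density 0 (sqrt (p+q)) y * (p/(p+q) * (g y * y))"
      using p q by (simp add: gauss_moment)
    finally show "(\<integral>x. G x y \<partial>lborel) = normal_density 0 (sqrt (p+q)) y * (p/(p+q) * (g y * y))" .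
  qed
  finally show ?thesis unfolding F_def .
qed

definition Vf :: "real \<Rightarrow> real \<Rightarrow> real \<Rightarrow> real \<Rightarrow> real" where
  "Vf r lam y a = r * a * y - lam * (a\<^sup>2 + (1 - a)\<^sup>2)"

lemma (in prob_space) joint_density:
  assumes D: "distributed M lborel \<delta> (\<lambda>x. ennreal (fd x))"
    and E: "distributed M lborel \<epsilon> (\<lambda>x. ennreal (fe x))"
    and I: "indep_var borel \<delta> borel \<epsilon>"
    and fdn: "\<And>x. fd x \<ge> 0" and fen: "\<And>x. fe x \<ge> 0"
  shows "distributed M (lborel \<Otimes>\<^sub>M lborel) (\<lambda>\<omega>. (\<delta> \<omega>, \<epsilon> \<omega>)) (\<lambda>z. ennreal (fd (fst z) * fe (snd z)))"
proof -
  have eq: "distr M borel \<delta> \<Otimes>\<^sub>M distr M borel \<epsilon> = distr M (borel \<Otimes>\<^sub>M borel) (\<lambda>x. (\<delta> x, \<epsilon> x))"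
    using I unfolding indep_var_distribution_eq by simp
  have "distr M lborel \<delta> = distr M borel \<delta>" "distr M lborel \<epsilon> = distr M borel \<epsilon>"
    by (auto intro!: distr_cong)
  moreover have "distr M (lborel \<Otimes>\<^sub>M lborel) (\<lambda>x. (\<delta> x, \<epsilon> x)) = distr M (borel \<Otimes>\<^sub>M borel) (\<lambda>x. (\<delta> x, \<epsilon> x))"
    by (intro distr_cong) auto
  ultimately have eq2: "distr M lborel \<delta> \<Otimes>\<^sub>M distr M lborel \<epsilon> = distr M (lborel \<Otimes>\<^sub>M lborel) (\<lambda>x. (\<delta> x, \<epsilon> x))"
    using eq by simp
  have "distributed M (lborel \<Otimes>\<^sub>M lborel) (\<lambda>\<omega>. (\<delta> \<omega>, \<epsilon> \<omega>)) (\<lambda>(x, y). ennreal (fd x) * ennreal (fe y))"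
    by (rule distributed_joint_indep'[OF _ _ D E eq2]) (auto intro: lborel.sigma_finite_measure_axioms)
  moreover have "(\<lambda>(x, y). ennreal (fd x) * ennreal (fe y)) = (\<lambda>z. ennreal (fd (fst z) * fe (snd z)))"
    using fdn fen by (auto simp: fun_eq_iff ennreal_mult)
  ultimately show ?thesis by simp
qed

lemma Vf_integrable:
  assumes w[measurable]: "w \<in> borel_measurable borel" and wb: "\<And>x. w x \<in> {0..1}"
    and r: "0 \<le> r" "r \<le> 1" and v: "v > 0"
  shows "integrable lborel (\<lambda>y. normal_density 0 v y * (r * (w y * y)))"
    and "integrable lborel (\<lambda>y. normal_density 0 v y * ((w y)\<^sup>2 + (1 - w y)\<^sup>2))"
proof -
  show "integrable lborel (\<lambda>y. normal_density 0 v y * (r * (w y * y)))"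
  proof (rule Bochner_Integration.integrable_bound[OF integrable_normal_moment_nz_1[OF v, of 0]])
    show "(\<lambda>y. normal_density 0 v y * (r * (w y * y))) \<in> borel_measurable lborel" by measurable
    show "AE x in lborel. norm (normal_density 0 v x * (r * (w x * x))) \<le> norm (normal_density 0 v x * x)"
    proof (intro AE_I2)
      fix x
      have "\<bar>r * w x\<bar> \<le> 1" using wb[of x] r by (auto simp: abs_mult intro: mult_le_one)
      then have "\<bar>r * w x\<bar> * (normal_density 0 v x * \<bar>x\<bar>) \<le> 1 * (normal_density 0 v x * \<bar>x\<bar>)"
        by (intro mult_right_mono) auto
      then show "norm (normal_density 0 v x * (r * (w x * x))) \<le> norm (normal_density 0 v x * x)"
        by (simp add: abs_mult ac_simps)
    qed
  qed
  show "integrable lborel (\<lambda>y. normal_density 0 v y * ((w y)\<^sup>2 + (1 - w y)\<^sup>2))"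
  proof (rule Bochner_Integration.integrable_bound[OF integrable_normal_density[OF v, of 0]])
    show "(\<lambda>y. normal_density 0 v y * ((w y)\<^sup>2 + (1 - w y)\<^sup>2)) \<in> borel_measurable lborel" by measurable
    show "AE x in lborel. norm (normal_density 0 v x * ((w x)\<^sup>2 + (1 - w x)\<^sup>2)) \<le> norm (normal_density 0 v x)"
    proof (intro AE_I2)
      fix x
      have a: "0 \<le> w x" "w x \<le> 1" using wb[of x] by auto
      have "(w x)\<^sup>2 + (1 - w x)\<^sup>2 \<le> 1"
      proof -
        have "(w x)\<^sup>2 + (1 - w x)\<^sup>2 = 1 - 2 * (w x * (1 - w x))" by (simp add: power2_eq_square algebra_simps)
        moreover have "0 \<le> w x * (1 - w x)" using a by simp
        ultimately show ?thesis by linarith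
      qed
      then have "normal_density 0 v x * ((w x)\<^sup>2 + (1 - w x)\<^sup>2) \<le> normal_density 0 v x * 1"
        by (intro mult_left_mono) auto
      then show "norm (normal_density 0 v x * ((w x)\<^sup>2 + (1 - w x)\<^sup>2)) \<le> norm (normal_density 0 v x)"
        by simp
    qed
  qed
qed

lemma (in prob_space) EU:
  assumes lam: "lam > 0" and t: "tau2 > 0" and s: "s2 > 0"
    and D: "distributed M lborel \<delta> (normal_density 0 (sqrt tau2))"
    and E: "distributed M lborel \<epsilon> (normal_density 0 (sqrt s2))"
    and I: "indep_var borel \<delta> borel \<epsilon>"
    and w[measurable]: "w \<in> borel_measurable borel" and wb: "\<And>x. w x \<in> {0..1}"
  shows "expectation (\<lambda>\<omega>. mv_utility mu2 lam (w (\<delta> \<omega> + \<epsilon> \<omega>)) (\<delta> \<omega>))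
     = mu2 + (\<integral>y. normal_density 0 (sqrt (tau2+s2)) y * Vf (tau2/(tau2+s2)) lam y (w y) \<partial>lborel)"
proof -
  let ?fd = "normal_density 0 (sqrt tau2)" and ?fe = "normal_density 0 (sqrt s2)"
    and ?fX = "normal_density 0 (sqrt (tau2+s2))" and ?r = "tau2/(tau2+s2)"
  have Dm[measurable]: "\<delta> \<in> borel_measurable M" using distributed_measurable[OF D] by simp
  have Em[measurable]: "\<epsilon> \<in> borel_measurable M" using distributed_measurable[OF E] by simp
  have X: "distributed M lborel (\<lambda>\<omega>. \<delta> \<omega> + \<epsilon> \<omega>) ?fX"
    using add_indep_normal[OF I _ _ D E] t s by simp
  have J: "distributed M (lborel \<Otimes>\<^sub>M lborel) (\<lambda>\<omega>. (\<delta> \<omega>, \<epsilon> \<omega>)) (\<lambda>z. ennreal (?fd (fst z) * ?fe (snd z)))"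
    by (rule joint_density[OF D E I]) auto
  have r: "0 \<le> ?r" "?r \<le> 1" using t s by auto
  have wb1: "\<And>y. \<bar>w y\<bar> \<le> 1" using wb by (auto simp: abs_le_iff)
  have E1: "expectation (\<lambda>\<omega>. w (\<delta> \<omega> + \<epsilon> \<omega>) * \<delta> \<omega>) = (\<integral>y. ?fX y * (?r * (w y * y)) \<partial>lborel)"
  proof -
    have "expectation (\<lambda>\<omega>. w (\<delta> \<omega> + \<epsilon> \<omega>) * \<delta> \<omega>) =
       (\<integral>z. ?fd (fst z) * ?fe (snd z) * (w (fst z + snd z) * fst z) \<partial>(lborel \<Otimes>\<^sub>M lborel))"
      by (subst distributed_integral[OF J]) auto
    also have "\<dots> = (\<integral>y. ?fX y * (?r * (w y * y)) \<partial>lborel)"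
      by (rule key2d[OF t s w wb1])
    finally show ?thesis .
  qed
  have E2: "expectation (\<lambda>\<omega>. (w (\<delta> \<omega> + \<epsilon> \<omega>))\<^sup>2 + (1 - w (\<delta> \<omega> + \<epsilon> \<omega>))\<^sup>2) =
     (\<integral>y. ?fX y * ((w y)\<^sup>2 + (1 - w y)\<^sup>2) \<partial>lborel)"
    by (subst distributed_integral[OF X]) auto
  have intD: "integrable M \<delta>"
    using distributed_integrable[OF D, of "\<lambda>x. x"] integrable_normal_moment_nz_1[of "sqrt tau2" 0] t by simp
  have I1: "integrable M (\<lambda>\<omega>. w (\<delta> \<omega> + \<epsilon> \<omega>) * \<delta> \<omega>)"
  proof (rule Bochner_Integration.integrable_bound[OF intD])
    show "(\<lambda>\<omega>. w (\<delta> \<omega> + \<epsilon> \<omega>) * \<delta> \<omega>) \<in> borel_measurable M" by measurable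
    show "AE x in M. norm (w (\<delta> x + \<epsilon> x) * \<delta> x) \<le> norm (\<delta> x)"
      using wb1 by (auto simp: abs_mult intro!: mult_left_le_one_le)
  qed
  have I2: "integrable M (\<lambda>\<omega>. (w (\<delta> \<omega> + \<epsilon> \<omega>))\<^sup>2 + (1 - w (\<delta> \<omega> + \<epsilon> \<omega>))\<^sup>2)"
  proof (rule integrable_const_bound[where B=2])
    show "AE x in M. norm ((w (\<delta> x + \<epsilon> x))\<^sup>2 + (1 - w (\<delta> x + \<epsilon> x))\<^sup>2) \<le> 2"
    proof (intro AE_I2)
      fix x
      have a: "0 \<le> w (\<delta> x + \<epsilon> x)" "w (\<delta> x + \<epsilon> x) \<le> 1" using wb by auto
      have "(w (\<delta> x + \<epsilon> x))\<^sup>2 \<le> 1" "(1 - w (\<delta> x + \<epsilon> x))\<^sup>2 \<le> 1"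
        using a by (auto simp: power_le_one abs_le_iff intro!: power_le_one)
      then show "norm ((w (\<delta> x + \<epsilon> x))\<^sup>2 + (1 - w (\<delta> x + \<epsilon> x))\<^sup>2) \<le> 2" by simp
    qed
  qed measurable
  have "expectation (\<lambda>\<omega>. mv_utility mu2 lam (w (\<delta> \<omega> + \<epsilon> \<omega>)) (\<delta> \<omega>)) =
     expectation (\<lambda>\<omega>. mu2 + w (\<delta> \<omega> + \<epsilon> \<omega>) * \<delta> \<omega> - lam * ((w (\<delta> \<omega> + \<epsilon> \<omega>))\<^sup>2 + (1 - w (\<delta> \<omega> + \<epsilon> \<omega>))\<^sup>2))"
    by (simp add: mv_utility_def)
  also have "\<dots> = mu2 + expectation (\<lambda>\<omega>. w (\<delta> \<omega> + \<epsilon> \<omega>) * \<delta> \<omega>)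
      - lam * expectation (\<lambda>\<omega>. (w (\<delta> \<omega> + \<epsilon> \<omega>))\<^sup>2 + (1 - w (\<delta> \<omega> + \<epsilon> \<omega>))\<^sup>2)"
    using I1 I2 by (simp add: prob_space)
  also have "\<dots> = mu2 + (\<integral>y. ?fX y * (?r * (w y * y)) \<partial>lborel) - lam * (\<integral>y. ?fX y * ((w y)\<^sup>2 + (1 - w y)\<^sup>2) \<partial>lborel)"
    by (simp add: E1 E2)
  also have "\<dots> = mu2 + (\<integral>y. ?fX y * Vf ?r lam y (w y) \<partial>lborel)"
  proof -
    have v: "sqrt (tau2+s2) > 0" using t s by simp
    note i = Vf_integrable[OF w wb r v]
    have "(\<integral>y. ?fX y * Vf ?r lam y (w y) \<partial>lborel) =
      (\<integral>y. ?fX y * (?r * (w y * y)) - lam * (?fX y * ((w y)\<^sup>2 + (1 - w y)\<^sup>2)) \<partial>lborel)"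
      by (rule Bochner_Integration.integral_cong) (auto simp: Vf_def algebra_simps)
    also have "\<dots> = (\<integral>y. ?fX y * (?r * (w y * y)) \<partial>lborel) - lam * (\<integral>y. ?fX y * ((w y)\<^sup>2 + (1 - w y)\<^sup>2) \<partial>lborel)"
      using i by simp
    finally show ?thesis by simp
  qed
  finally show ?thesis .
qed

lemma Vf_int:
  assumes w[measurable]: "w \<in> borel_measurable borel" and wb: "\<And>x. w x \<in> {0..1}"
    and r: "0 \<le> r" "r \<le> 1" and v: "v > 0"
  shows "integrable lborel (\<lambda>y. normal_density 0 v y * Vf r lam y (w y))"
proof -
  note i = Vf_integrable[OF w wb r v]
  have "integrable lborel (\<lambda>y. normal_density 0 v y * (r * (w y * y)) - lam * (normal_density 0 v y * ((w y)\<^sup>2 + (1 - w y)\<^sup>2)))"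
    using i by simp
  moreover have "(\<lambda>y. normal_density 0 v y * (r * (w y * y)) - lam * (normal_density 0 v y * ((w y)\<^sup>2 + (1 - w y)\<^sup>2)))
    = (\<lambda>y. normal_density 0 v y * Vf r lam y (w y))"
    by (auto simp: fun_eq_iff Vf_def algebra_simps)
  ultimately show ?thesis by simp
qed

lemma clip01_range: "clip01 x \<in> {0..1}"
  by (simp add: clip01_def)

lemma clip01_meas[measurable]: "clip01 \<in> borel_measurable borel"
  unfolding clip01_def by measurable

lemma proj:
  assumes lam: "lam > 0" and a: "0 \<le> a" "a \<le> 1"
  shows "Vf r lam y a + 2*lam*(a - clip01 (1/2 + r*y/(4*lam)))\<^sup>2 \<le> Vf r lam y (clip01 (1/2 + r*y/(4*lam)))"
proof -
  define c where "c = 1/2 + r*y/(4*lam)"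
  have ry: "r*y = 4*lam*c - 2*lam" using lam by (simp add: c_def field_simps)
  have V: "\<And>b. Vf r lam y b = (4*lam*c - 2*lam)*b - lam*(b\<^sup>2 + (1-b)\<^sup>2)"
    unfolding Vf_def using ry by (simp add: ac_simps)
  show ?thesis
  proof (cases "c < 0")
    case True
    then have cl: "clip01 c = 0" by (simp add: clip01_def)
    have "(4*lam*c - 2*lam)*0 - lam*(0\<^sup>2 + (1-0)\<^sup>2) - ((4*lam*c - 2*lam)*a - lam*(a\<^sup>2 + (1-a)\<^sup>2) + 2*lam*(a - 0)\<^sup>2)
       = 4*lam*a*(-c)" by (simp add: power2_eq_square algebra_simps)
    moreover have "0 \<le> 4*lam*a*(-c)" using True lam a by (intro mult_nonneg_nonneg) auto
    ultimately show ?thesis unfolding c_def[symmetric] V cl by linarith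
  next
    case False
    show ?thesis
    proof (cases "c > 1")
      case True
      then have cl: "clip01 c = 1" by (simp add: clip01_def)
      have "(4*lam*c - 2*lam)*1 - lam*(1\<^sup>2 + (1-1)\<^sup>2) - ((4*lam*c - 2*lam)*a - lam*(a\<^sup>2 + (1-a)\<^sup>2) + 2*lam*(a - 1)\<^sup>2)
         = 4*lam*((1-a)*(c-1))" by (simp add: power2_eq_square algebra_simps)
      moreover have "0 \<le> 4*lam*((1-a)*(c-1))" using True lam a by (intro mult_nonneg_nonneg) auto
      ultimately show ?thesis unfolding c_def[symmetric] V cl by linarith
    next
      case F2: False
      then have cl: "clip01 c = c" using False by (simp add: clip01_def)
      have "(4*lam*c - 2*lam)*c - lam*(c\<^sup>2 + (1-c)\<^sup>2) - ((4*lam*c - 2*lam)*a - lam*(a\<^sup>2 + (1-a)\<^sup>2) + 2*lam*(a - c)\<^sup>2)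
         = 0" by (simp add: power2_eq_square algebra_simps)
      then show ?thesis unfolding c_def[symmetric] V cl by linarith
    qed
  qed
qed

theorem proposition5:
  fixes M :: "'a measure" and \<delta> \<epsilon> :: "'a \<Rightarrow> real"
    and mu2 lam tau2 s2 :: real
  assumes "prob_space M"
    and "lam > 0" and "tau2 > 0" and "s2 > 0"
    and "distributed M lborel \<delta> (normal_density 0 (sqrt tau2))"
    and "distributed M lborel \<epsilon> (normal_density 0 (sqrt s2))"
    and "prob_space.indep_var M borel \<delta> borel \<epsilon>"
  shows "(\<forall>w :: real \<Rightarrow> real. w \<in> borel_measurable borel \<longrightarrow> (\<forall>x. w x \<in> {0..1}) \<longrightarrow>
           prob_space.expectation M (\<lambda>\<omega>. mv_utility mu2 lam (w (\<delta> \<omega> + \<epsilon> \<omega>)) (\<delta> \<omega>))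
           \<le> prob_space.expectation M
                (\<lambda>\<omega>. mv_utility mu2 lam (w_e2e tau2 s2 lam (\<delta> \<omega> + \<epsilon> \<omega>)) (\<delta> \<omega>)))
       \<and> prob_space.expectation M (\<lambda>\<omega>. mv_utility mu2 lam (w_pto lam (\<delta> \<omega> + \<epsilon> \<omega>)) (\<delta> \<omega>))
         < prob_space.expectation M
             (\<lambda>\<omega>. mv_utility mu2 lam (w_e2e tau2 s2 lam (\<delta> \<omega> + \<epsilon> \<omega>)) (\<delta> \<omega>))"
proof -
  interpret prob_space M by fact
  have lam: "lam > 0" and t: "tau2 > 0" and s: "s2 > 0" using assms by auto
  let ?r = "tau2/(tau2+s2)" and ?fX = "normal_density 0 (sqrt (tau2+s2))"
  have v: "sqrt (tau2+s2) > 0" using t s by simp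
  have r: "0 \<le> ?r" "?r \<le> 1" using t s by auto
  have r1: "?r < 1" using t s by auto
  have EU': "\<And>w. w \<in> borel_measurable borel \<Longrightarrow> (\<And>x. w x \<in> {0..1}) \<Longrightarrow>
      expectation (\<lambda>\<omega>. mv_utility mu2 lam (w (\<delta> \<omega> + \<epsilon> \<omega>)) (\<delta> \<omega>))
      = mu2 + (\<integral>y. ?fX y * Vf ?r lam y (w y) \<partial>lborel)"
    by (rule EU[OF assms(2-7)])
  define we where "we = (\<lambda>y. clip01 (1/2 + ?r*y/(4*lam)))"
  have we_eq: "w_e2e tau2 s2 lam = we" by (simp add: fun_eq_iff w_e2e_def we_def)
  have we_m[measurable]: "we \<in> borel_measurable borel" unfolding we_def by measurable
  have we_r: "\<And>x. we x \<in> {0..1}" unfolding we_def by (rule clip01_range)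
  define wp where "wp = (\<lambda>y. clip01 (1/2 + y/(4*lam)))"
  have wp_eq: "w_pto lam = wp" by (simp add: fun_eq_iff w_pto_def wp_def)
  have wp_m[measurable]: "wp \<in> borel_measurable borel" unfolding wp_def by measurable
  have wp_r: "\<And>x. wp x \<in> {0..1}" unfolding wp_def by (rule clip01_range)
  have pw: "?fX y * Vf ?r lam y a + ?fX y * (2*lam*(a - we y)\<^sup>2) \<le> ?fX y * Vf ?r lam y (we y)"
    if "a \<in> {0..1}" for a y
  proof -
    have "Vf ?r lam y a + 2*lam*(a - we y)\<^sup>2 \<le> Vf ?r lam y (we y)"
      unfolding we_def using proj[OF lam, of a ?r y] that by auto
    then have "?fX y * (Vf ?r lam y a + 2*lam*(a - we y)\<^sup>2) \<le> ?fX y * Vf ?r lam y (we y)"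
      by (intro mult_left_mono) auto
    then show ?thesis by (simp add: distrib_left)
  qed
  have pw0: "?fX y * (2*lam*(a - we y)\<^sup>2) \<ge> 0" for a y using lam by simp
  have part1: "\<forall>w :: real \<Rightarrow> real. w \<in> borel_measurable borel \<longrightarrow> (\<forall>x. w x \<in> {0..1}) \<longrightarrow>
           expectation (\<lambda>\<omega>. mv_utility mu2 lam (w (\<delta> \<omega> + \<epsilon> \<omega>)) (\<delta> \<omega>))
           \<le> expectation (\<lambda>\<omega>. mv_utility mu2 lam (w_e2e tau2 s2 lam (\<delta> \<omega> + \<epsilon> \<omega>)) (\<delta> \<omega>))"
  proof (intro allI impI)
    fix w :: "real \<Rightarrow> real"
    assume wm: "w \<in> borel_measurable borel" and wr: "\<forall>x. w x \<in> {0..1}"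
    have "(\<integral>y. ?fX y * Vf ?r lam y (w y) \<partial>lborel) \<le> (\<integral>y. ?fX y * Vf ?r lam y (we y) \<partial>lborel)"
    proof (rule integral_mono[OF Vf_int[OF wm _ r v] Vf_int[OF we_m we_r r v]])
      show "\<And>x. w x \<in> {0..1}" using wr by blast
      fix y
      show "?fX y * Vf ?r lam y (w y) \<le> ?fX y * Vf ?r lam y (we y)"
        using pw[of "w y" y] pw0[of y "w y"] wr by (meson order.trans le_add_same_cancel1)
    qed
    then show "expectation (\<lambda>\<omega>. mv_utility mu2 lam (w (\<delta> \<omega> + \<epsilon> \<omega>)) (\<delta> \<omega>))
           \<le> expectation (\<lambda>\<omega>. mv_utility mu2 lam (w_e2e tau2 s2 lam (\<delta> \<omega> + \<epsilon> \<omega>)) (\<delta> \<omega>))"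
      unfolding we_eq using EU'[OF wm] EU'[OF we_m we_r] wr by simp
  qed
  define D where "D = (\<lambda>y. ?fX y * Vf ?r lam y (we y) - ?fX y * Vf ?r lam y (wp y))"
  have Dint: "integrable lborel D"
    unfolding D_def using Vf_int[OF we_m we_r r v] Vf_int[OF wp_m wp_r r v] by simp
  have Dnn: "\<And>y. 0 \<le> D y" unfolding D_def using pw[OF wp_r] pw0 by (smt (verit))
  have Dpos: "0 < D y" if y: "y \<in> {0<..<2*lam}" for y
  proof -
    have yl: "0 < y/(4*lam)" "y/(4*lam) < 1/2" using y lam by (auto simp: field_simps)
    have wpy: "wp y = 1/2 + y/(4*lam)"
      using yl by (simp add: wp_def clip01_def)
    have "?r*y \<le> 1*y" using r y by (intro mult_right_mono) auto
    then have "?r*y/(4*lam) \<le> y/(4*lam)"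
      using lam by (intro divide_right_mono) auto
    moreover have "0 \<le> ?r*y/(4*lam)" using r y lam t s by (intro divide_nonneg_pos mult_nonneg_nonneg) auto
    ultimately have wey: "we y = 1/2 + ?r*y/(4*lam)"
      using yl by (simp add: we_def clip01_def)
    have "?r*y < 1*y" using r1 y by (intro mult_strict_right_mono) auto
    then have "?r*y/(4*lam) < y/(4*lam)" using lam by (intro divide_strict_right_mono) auto
    then have "wp y \<noteq> we y" using wpy wey by auto
    then have "0 < ?fX y * (2*lam*(wp y - we y)\<^sup>2)"
      using lam v by (auto intro!: mult_pos_pos normal_density_pos)
    then show ?thesis unfolding D_def using pw[OF wp_r[of y], of y] by linarith
  qed
  have "integral\<^sup>L lborel D \<noteq> 0"
  proof
    assume "integral\<^sup>L lborel D = 0"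
    then have "AE y in lborel. D y = 0"
      using integral_nonneg_eq_0_iff_AE[OF Dint] Dnn by simp
    then have "AE y in lborel. y \<notin> {0<..<2*lam}"
      by eventually_elim (use Dpos in force)
    then have "emeasure lborel {0<..<2*lam} = 0"
      by (subst (asm) AE_iff_measurable[of "{0<..<2*lam}"]) auto
    then show False using lam by simp
  qed
  moreover have "integral\<^sup>L lborel D \<ge> 0" using Dnn by simp
  ultimately have "integral\<^sup>L lborel D > 0" by linarith
  moreover have "integral\<^sup>L lborel D = (\<integral>y. ?fX y * Vf ?r lam y (we y) \<partial>lborel) - (\<integral>y. ?fX y * Vf ?r lam y (wp y) \<partial>lborel)"
    unfolding D_def using Vf_int[OF we_m we_r r v] Vf_int[OF wp_m wp_r r v] by simp
  ultimately have part2: "expectation (\<lambda>\<omega>. mv_utility mu2 lam (w_pto lam (\<delta> \<omega> + \<epsilon> \<omega>)) (\<delta> \<omega>))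
         < expectation (\<lambda>\<omega>. mv_utility mu2 lam (w_e2e tau2 s2 lam (\<delta> \<omega> + \<epsilon> \<omega>)) (\<delta> \<omega>))"
    unfolding we_eq wp_eq using EU'[OF wp_m wp_r] EU'[OF we_m we_r] by simp
  show ?thesis using part1 part2 by blast
qed

end
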